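(* Let $l,d\ge 1$ and let $(X,Y)$ be a random vector in $\mathbb{R}^l\times\mathbb{R}^d$ with joint law $W$. Let $\rho:\mathbb{R}^l\to\mathbb{R}$ be a polynomial of degree at most $1$ with $\rho(X)\neq 0$ almost surely, and assume that the random vector $Z:=Y/\rho(X)\in\mathbb{R}^d$ is independent of $X$. Let $W_X$ and $W_Z$ denote the laws of $X$ and $Z$, and assume $X$ and $Z$ have finite moments of all orders. For each $m\in\mathbb{N}=\{0,1,2,\dots\}$ let $\{P^{(m)}_k:k\in\mathbb{N}^l\}$ be polynomials on $\mathbb{R}^l$, $P^{(m)}_k$ of total degree $|k|$, such that $\int P^{(m)}_kP^{(m)}_{k'}\,\rho(x)^{2m}\,W_X(dx)=0$ whenever $k\neq k'$; and let $\{R_s:s\in\mathbb{N}^d\}$ be polynomials on $\mathbb{R}^d$, $R_s$ of total degree $|s|$, such that $\int R_sR_{s'}\,dW_Z=0$ whenever $s\ne s'$. For $n=(k,s)\in\mathbb{N}^{l}\times\mathbb{N}^d$ define $$G_n(x,y)=P^{(|s|)}_k(x)\,\rho(x)^{|s|}\,R_s\!\left(\frac{y}{\rho(x)}\right).$$ Then each $G_n$ is a polynomial in $(x,y)$ of total degree $|n|=|k|+|s|$, and for $n=(k,s)$, $n'=(k',s')$, $$\int G_n G_{n'}\,dW=\delta_{nn'}\int \big(P^{(|s|)}_k\big)^2\rho^{2|s|}\,dW_X\int R_s^2\,dW_Z .$$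
   Context: For $z\in\mathbb{R}^d$ (or a multi-index), $|z|=\sum_i z_i$. $\delta_{nn'}$ is the Kronecker delta. *)

theory Defs
  imports "HOL-Probability.Probability"
begin

text \<open>Multi-indices in N^n are functions 'n \<Rightarrow> nat on a finite index type; |a| = sum a UNIV.\<close>

definition mono_fn :: "('n::finite \<Rightarrow> nat) \<Rightarrow> real ^ 'n \<Rightarrow> real" where
  "mono_fn a x = (\<Prod>i\<in>UNIV. (x $ i) ^ (a i))"

definition poly_fn_on :: "('n::finite \<Rightarrow> nat) set \<Rightarrow> (real ^ 'n \<Rightarrow> real) \<Rightarrow> bool" where
  "poly_fn_on S f \<longleftrightarrow> (\<exists>c :: ('n \<Rightarrow> nat) \<Rightarrow> real. finite {a. c a \<noteq> 0} \<and>
      (\<forall>a. c a \<noteq> 0 \<longrightarrow> a \<in> S) \<and> (\<forall>x. f x = (\<Sum>a\<in>{a. c a \<noteq> 0}. c a * mono_fn a x)))"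

definition poly_deg_le :: "nat \<Rightarrow> (real ^ 'n::finite \<Rightarrow> real) \<Rightarrow> bool" where
  "poly_deg_le D f \<longleftrightarrow> poly_fn_on {a. sum a UNIV \<le> D} f"

text \<open>Total degree exactly D (the zero polynomial has no degree).\<close>
definition poly_deg_eq :: "nat \<Rightarrow> (real ^ 'n::finite \<Rightarrow> real) \<Rightarrow> bool" where
  "poly_deg_eq D f \<longleftrightarrow> poly_deg_le D f \<and> \<not> poly_fn_on {a. sum a UNIV < D} f"

definition poly2_fn_on :: "(('l::finite \<Rightarrow> nat) \<times> ('d::finite \<Rightarrow> nat)) set
    \<Rightarrow> ((real ^ 'l) \<times> (real ^ 'd) \<Rightarrow> real) \<Rightarrow> bool" where
  "poly2_fn_on S f \<longleftrightarrow> (\<exists>c :: ('l \<Rightarrow> nat) \<times> ('d \<Rightarrow> nat) \<Rightarrow> real. finite {a. c a \<noteq> 0} \<and>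
      (\<forall>a. c a \<noteq> 0 \<longrightarrow> a \<in> S) \<and>
      (\<forall>x y. f (x, y) = (\<Sum>a\<in>{a. c a \<noteq> 0}. c a * mono_fn (fst a) x * mono_fn (snd a) y)))"

definition poly2_deg_eq :: "nat \<Rightarrow> ((real ^ 'l::finite) \<times> (real ^ 'd::finite) \<Rightarrow> real) \<Rightarrow> bool" where
  "poly2_deg_eq D f \<longleftrightarrow> poly2_fn_on {a. sum (fst a) UNIV + sum (snd a) UNIV \<le> D} f \<and>
     \<not> poly2_fn_on {a. sum (fst a) UNIV + sum (snd a) UNIV < D} f"

definition Gfun :: "(nat \<Rightarrow> ('l::finite \<Rightarrow> nat) \<Rightarrow> real ^ 'l \<Rightarrow> real) \<Rightarrow> (real ^ 'l \<Rightarrow> real)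
    \<Rightarrow> (('d::finite \<Rightarrow> nat) \<Rightarrow> real ^ 'd \<Rightarrow> real) \<Rightarrow> ('l \<Rightarrow> nat) \<Rightarrow> ('d \<Rightarrow> nat)
    \<Rightarrow> (real ^ 'l) \<times> (real ^ 'd) \<Rightarrow> real" where
  "Gfun P \<rho> R k s = (\<lambda>(x, y). P (sum s UNIV) k x * \<rho> x ^ (sum s UNIV) * R s (y /\<^sub>R \<rho> x))"

end

theory Submission
  imports Defs
begin


lemma mono_fn_add: "mono_fn (\<lambda>i. a i + b i) x = mono_fn a x * mono_fn b x"
  unfolding mono_fn_def by (simp add: power_add prod.distrib)

lemma mono_fn_scale: "mono_fn a (t *\<^sub>R x) = t ^ sum a UNIV * mono_fn a x"
  unfolding mono_fn_def by (simp add: power_mult_distrib prod.distrib power_sum)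

lemma mono_fn_zero: "mono_fn (\<lambda>_. 0) x = 1"
  unfolding mono_fn_def by simp

lemma mono_fn_bound: "\<bar>mono_fn a x\<bar> \<le> norm x ^ sum a UNIV"
  unfolding mono_fn_def power_sum abs_prod
  by (intro prod_mono) (auto simp: power_abs intro!: power_mono component_le_norm_cart)

lemma sum_extend:
  fixes c M :: "'a \<Rightarrow> real"
  assumes "finite B" "A \<subseteq> B"
  shows "(\<Sum>a\<in>A. c a * M a) = (\<Sum>a\<in>B. (if a \<in> A then c a else 0) * M a)"
proof -
  have "(\<Sum>a\<in>B. (if a \<in> A then c a else 0) * M a) = (\<Sum>a\<in>B. if a \<in> A then c a * M a else 0)"
    by (intro sum.cong) auto
  also have "\<dots> = (\<Sum>a\<in>B \<inter> A. c a * M a)" by (simp add: sum.If_cases assms)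
  also have "B \<inter> A = A" using assms by auto
  finally show ?thesis by simp
qed

lemma sum_mult_regroup:
  fixes c d :: "'a \<Rightarrow> real" and M :: "'a \<Rightarrow> real"
  assumes "finite A" "finite B" "\<And>a b. M (pl a b) = M a * M b"
  shows "(\<Sum>a\<in>A. c a * M a) * (\<Sum>b\<in>B. d b * M b) =
    (\<Sum>e\<in>(\<lambda>(a,b). pl a b) ` (A \<times> B). (\<Sum>ab\<in>{ab\<in>A \<times> B. (\<lambda>(a,b). pl a b) ab = e}. c (fst ab) * d (snd ab)) * M e)"
proof -
  have "(\<Sum>a\<in>A. c a * M a) * (\<Sum>b\<in>B. d b * M b) = (\<Sum>ab\<in>A \<times> B. c (fst ab) * d (snd ab) * M ((\<lambda>(a,b). pl a b) ab))"
    unfolding sum_product sum.cartesian_product by (intro sum.cong) (auto simp: assms mult_ac)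
  also have "\<dots> = (\<Sum>e\<in>(\<lambda>(a,b). pl a b) ` (A \<times> B). \<Sum>ab\<in>{ab\<in>A \<times> B. (\<lambda>(a,b). pl a b) ab = e}. c (fst ab) * d (snd ab) * M ((\<lambda>(a,b). pl a b) ab))"
    by (rule sum.image_gen) (use assms in auto)
  also have "\<dots> = (\<Sum>e\<in>(\<lambda>(a,b). pl a b) ` (A \<times> B). (\<Sum>ab\<in>{ab\<in>A \<times> B. (\<lambda>(a,b). pl a b) ab = e}. c (fst ab) * d (snd ab)) * M e)"
    by (intro sum.cong refl) (auto simp: sum_distrib_right)
  finally show ?thesis .
qed

definition pdg :: "('e \<Rightarrow> nat) \<Rightarrow> ('e \<Rightarrow> 'p \<Rightarrow> real) \<Rightarrow> nat \<Rightarrow> ('p \<Rightarrow> real) \<Rightarrow> bool" where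
  "pdg deg M D f \<longleftrightarrow> (\<exists>A c. finite A \<and> (\<forall>a\<in>A. deg a \<le> D) \<and> (\<forall>p. f p = (\<Sum>a\<in>A. c a * M a p)))"

locale monoms =
  fixes deg :: "'e \<Rightarrow> nat" and M :: "'e \<Rightarrow> 'p \<Rightarrow> real" and pl :: "'e \<Rightarrow> 'e \<Rightarrow> 'e" and z :: 'e
  assumes M_pl: "M (pl a b) p = M a p * M b p" and deg_pl: "deg (pl a b) = deg a + deg b"
    and M_z: "M z p = 1" and deg_z: "deg z = 0"
begin

lemma pdg_mono: "pdg deg M D f \<Longrightarrow> D \<le> D' \<Longrightarrow> pdg deg M D' f"
  unfolding pdg_def by (meson order_trans)

lemma pdg_const: "pdg deg M 0 (\<lambda>_. k)"
  unfolding pdg_def by (rule exI[of _ "{z}"], rule exI[of _ "\<lambda>_. k"]) (simp add: M_z deg_z)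

lemma pdg_add:
  assumes "pdg deg M D f" "pdg deg M D g"
  shows "pdg deg M D (\<lambda>p. f p + g p)"
proof -
  obtain A c where A: "finite A" "\<forall>a\<in>A. deg a \<le> D" "\<forall>p. f p = (\<Sum>a\<in>A. c a * M a p)"
    using assms(1) unfolding pdg_def by blast
  obtain B d where B: "finite B" "\<forall>a\<in>B. deg a \<le> D" "\<forall>p. g p = (\<Sum>a\<in>B. d a * M a p)"
    using assms(2) unfolding pdg_def by blast
  show ?thesis unfolding pdg_def
  proof (intro exI conjI allI)
    show "finite (A \<union> B)" using A B by simp
    show "\<forall>a\<in>A \<union> B. deg a \<le> D" using A B by auto
    fix p
    show "f p + g p = (\<Sum>a\<in>A \<union> B. ((if a \<in> A then c a else 0) + (if a \<in> B then d a else 0)) * M a p)"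
      using A B sum_extend[of "A \<union> B" A c "\<lambda>a. M a p"] sum_extend[of "A \<union> B" B d "\<lambda>a. M a p"]
      by (simp add: distrib_right sum.distrib)
  qed
qed

lemma pdg_mult:
  assumes "pdg deg M D1 f" "pdg deg M D2 g"
  shows "pdg deg M (D1 + D2) (\<lambda>p. f p * g p)"
proof -
  obtain A c where A: "finite A" "\<forall>a\<in>A. deg a \<le> D1" "\<forall>p. f p = (\<Sum>a\<in>A. c a * M a p)"
    using assms(1) unfolding pdg_def by blast
  obtain B d where B: "finite B" "\<forall>a\<in>B. deg a \<le> D2" "\<forall>p. g p = (\<Sum>a\<in>B. d a * M a p)"
    using assms(2) unfolding pdg_def by blast
  show ?thesis unfolding pdg_def
  proof (intro exI conjI allI)
    show "finite ((\<lambda>(a,b). pl a b) ` (A \<times> B))" using A B by simp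
    show "\<forall>e\<in>(\<lambda>(a,b). pl a b) ` (A \<times> B). deg e \<le> D1 + D2" using A B by (auto simp: deg_pl add_mono)
    fix p
    show "f p * g p = (\<Sum>e\<in>(\<lambda>(a,b). pl a b) ` (A \<times> B). (\<Sum>ab\<in>{ab\<in>A \<times> B. (\<lambda>(a,b). pl a b) ab = e}. c (fst ab) * d (snd ab)) * M e p)"
      using A B sum_mult_regroup[of A B "\<lambda>a. M a p" pl c d] by (simp add: M_pl)
  qed
qed

lemma pdg_sum:
  assumes "finite I" "\<And>i. i \<in> I \<Longrightarrow> pdg deg M D (f i)"
  shows "pdg deg M D (\<lambda>p. \<Sum>i\<in>I. f i p)"
  using assms
proof (induction I rule: finite_induct)
  case empty
  then show ?case using pdg_mono[OF pdg_const[of 0]] by simp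
next
  case (insert x F)
  then show ?case by (simp add: pdg_add)
qed

lemma pdg_pow:
  assumes "pdg deg M D f"
  shows "pdg deg M (n * D) (\<lambda>p. f p ^ n)"
proof (induction n)
  case 0
  then show ?case using pdg_const[of 1] by simp
next
  case (Suc n)
  then show ?case using pdg_mult[OF assms Suc] by simp
qed

lemma pdg_limit:
  assumes "finite A" "\<forall>a\<in>A. deg a \<le> D"
  shows "((\<lambda>t::real. (\<Sum>a\<in>A. c a * t ^ deg a * v a) / t ^ D) \<longlongrightarrow> (\<Sum>a\<in>{a\<in>A. deg a = D}. c a * v a)) at_top"
proof -
  have lim1: "((\<lambda>t::real. t ^ k / t ^ D) \<longlongrightarrow> (if k = D then 1 else 0)) at_top" if "k \<le> D" for k
  proof (cases "k = D")
    case True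
    have "eventually (\<lambda>t::real. 1 = t ^ k / t ^ D) at_top"
      using eventually_gt_at_top[of "0::real"] by eventually_elim (simp add: True)
    then show ?thesis using True tendsto_eventually by (simp add: tendsto_const Lim_transform_eventually)
  next
    case False
    have ev: "eventually (\<lambda>t::real. inverse (t ^ (D - k)) = t ^ k / t ^ D) at_top"
      using eventually_gt_at_top[of "0::real"] proof eventually_elim
      case (elim t)
      then show ?case using that by (simp add: power_diff field_simps)
    qed
    have "((\<lambda>t::real. inverse (t ^ (D - k))) \<longlongrightarrow> 0) at_top"
      by (intro tendsto_inverse_0_at_top filterlim_pow_at_top filterlim_ident) (use False that in auto)
    then show ?thesis using False Lim_transform_eventually[OF _ ev] by simp
  qed
  have eq: "(\<lambda>t::real. (\<Sum>a\<in>A. c a * t ^ deg a * v a) / t ^ D) = (\<lambda>t. \<Sum>a\<in>A. c a * v a * (t ^ deg a / t ^ D))"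
    by (auto simp: sum_divide_distrib mult_ac)
  have "((\<lambda>t::real. \<Sum>a\<in>A. c a * v a * (t ^ deg a / t ^ D)) \<longlongrightarrow> (\<Sum>a\<in>A. c a * v a * (if deg a = D then 1 else 0))) at_top"
    by (intro tendsto_sum tendsto_mult tendsto_const lim1) (use assms in auto)
  moreover have "(\<Sum>a\<in>A. c a * v a * (if deg a = D then 1 else 0)) = (\<Sum>a\<in>{a\<in>A. deg a = D}. c a * v a)"
    using assms(1) by (simp add: sum.inter_filter[symmetric] if_distrib cong: if_cong)
  ultimately show ?thesis unfolding eq by simp
qed

end



definition deg2 :: "('l::finite \<Rightarrow> nat) \<times> ('d::finite \<Rightarrow> nat) \<Rightarrow> nat" where
  "deg2 a = sum (fst a) UNIV + sum (snd a) UNIV"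
definition M2 :: "('l::finite \<Rightarrow> nat) \<times> ('d::finite \<Rightarrow> nat) \<Rightarrow> (real^'l) \<times> (real^'d) \<Rightarrow> real" where
  "M2 a p = mono_fn (fst a) (fst p) * mono_fn (snd a) (snd p)"

lemma m1: "monoms (\<lambda>a. sum a UNIV) mono_fn (\<lambda>a b i. a i + b i) (\<lambda>_. 0)"
  by unfold_locales (auto simp: mono_fn_add mono_fn_zero sum.distrib)

lemma m2: "monoms deg2 M2 (\<lambda>a b. (\<lambda>i. fst a i + fst b i, \<lambda>i. snd a i + snd b i)) (\<lambda>_. 0, \<lambda>_. 0)"
  by unfold_locales (auto simp: M2_def deg2_def mono_fn_add mono_fn_zero sum.distrib)

abbreviation "pd1 \<equiv> pdg (\<lambda>a. sum a UNIV) mono_fn"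
abbreviation "pd2 \<equiv> pdg deg2 M2"

lemma poly_fn_onI:
  assumes "finite A" "A \<subseteq> S" "\<forall>x. f x = (\<Sum>a\<in>A. c a * mono_fn a x)"
  shows "poly_fn_on S f"
  unfolding poly_fn_on_def
proof (intro exI conjI allI impI)
  let ?c = "\<lambda>a. if a \<in> A then c a else 0"
  show "finite {a. ?c a \<noteq> 0}" using assms(1) by (rule rev_finite_subset) auto
  show "a \<in> S" if "?c a \<noteq> 0" for a using that assms(2) by (auto split: if_splits)
  fix x
  have "f x = (\<Sum>a\<in>A. ?c a * mono_fn a x)" using assms(3) by simp
  also have "\<dots> = (\<Sum>a\<in>{a. ?c a \<noteq> 0}. ?c a * mono_fn a x)"
    by (rule sum.mono_neutral_right) (use assms(1) in auto)
  finally show "f x = (\<Sum>a\<in>{a. ?c a \<noteq> 0}. ?c a * mono_fn a x)" .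
qed

lemma poly2_fn_onI:
  assumes "finite A" "A \<subseteq> S" "\<forall>x y. f (x, y) = (\<Sum>a\<in>A. c a * mono_fn (fst a) x * mono_fn (snd a) y)"
  shows "poly2_fn_on S f"
  unfolding poly2_fn_on_def
proof (intro exI conjI allI impI)
  let ?c = "\<lambda>a. if a \<in> A then c a else 0"
  show "finite {a. ?c a \<noteq> 0}" using assms(1) by (rule rev_finite_subset) auto
  show "a \<in> S" if "?c a \<noteq> 0" for a using that assms(2) by (auto split: if_splits)
  fix x y
  have "f (x, y) = (\<Sum>a\<in>A. ?c a * mono_fn (fst a) x * mono_fn (snd a) y)" using assms(3) by simp
  also have "\<dots> = (\<Sum>a\<in>{a. ?c a \<noteq> 0}. ?c a * mono_fn (fst a) x * mono_fn (snd a) y)"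
    by (rule sum.mono_neutral_right) (use assms(1) in auto)
  finally show "f (x, y) = (\<Sum>a\<in>{a. ?c a \<noteq> 0}. ?c a * mono_fn (fst a) x * mono_fn (snd a) y)" .
qed

lemma poly_fn_onE:
  assumes "poly_fn_on S f"
  obtains A c where "finite A" "A \<subseteq> S" "\<And>x. f x = (\<Sum>a\<in>A. c a * mono_fn a x)"
  using assms unfolding poly_fn_on_def by blast

lemma poly2_fn_onE:
  assumes "poly2_fn_on S f"
  obtains A c where "finite A" "A \<subseteq> S" "\<And>x y. f (x, y) = (\<Sum>a\<in>A. c a * mono_fn (fst a) x * mono_fn (snd a) y)"
  using assms unfolding poly2_fn_on_def by blast

lemma pd1_of: "poly_deg_le D f \<Longrightarrow> pd1 D f"
  unfolding poly_deg_le_def pdg_def by (erule poly_fn_onE) auto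

lemma pd2_to: "pd2 D f \<Longrightarrow> poly2_fn_on {a. sum (fst a) UNIV + sum (snd a) UNIV \<le> D} f"
  unfolding pdg_def by (auto simp: M2_def deg2_def mult.assoc intro!: poly2_fn_onI)

lemma pd2_lift: "pd1 D f \<Longrightarrow> pd2 D (\<lambda>p. f (fst p))"
  unfolding pdg_def
proof (elim exE conjE)
  fix A c assume A: "finite A" "\<forall>a\<in>A. sum a UNIV \<le> D" "\<forall>p. f p = (\<Sum>a\<in>A. c a * mono_fn a p)"
  show "\<exists>A c. finite A \<and> (\<forall>a\<in>A. deg2 a \<le> D) \<and> (\<forall>p. f (fst p) = (\<Sum>a\<in>A. c a * M2 a p))"
    apply (rule exI[of _ "(\<lambda>a. (a, \<lambda>_. 0)) ` A"], rule exI[of _ "\<lambda>a. c (fst a)"])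
    using A by (auto simp: deg2_def M2_def mono_fn_zero sum.reindex inj_on_def)
qed

lemma pd2_y: "pd2 (sum a UNIV) (\<lambda>p. mono_fn a (snd p))"
  unfolding pdg_def
  by (rule exI[of _ "{(\<lambda>_. 0, a)}"], rule exI[of _ "\<lambda>_. 1"]) (auto simp: deg2_def M2_def mono_fn_zero)

lemma split_top:
  fixes c :: "'a \<Rightarrow> real"
  assumes "finite A"
  shows "(\<Sum>a\<in>A. c a * m a) = (\<Sum>a\<in>{a\<in>A. d a = K}. c a * m a) + (\<Sum>a\<in>{a\<in>A. d a \<noteq> K}. c a * m a)"
proof -
  have "A = {a\<in>A. d a = K} \<union> {a\<in>A. d a \<noteq> K}" by auto
  then have "(\<Sum>a\<in>A. c a * m a) = (\<Sum>a\<in>{a\<in>A. d a = K} \<union> {a\<in>A. d a \<noteq> K}. c a * m a)" by simp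
  also have "\<dots> = (\<Sum>a\<in>{a\<in>A. d a = K}. c a * m a) + (\<Sum>a\<in>{a\<in>A. d a \<noteq> K}. c a * m a)" by (rule sum.union_disjoint) (use assms in auto)
  finally show ?thesis .
qed

lemma top_nonzero:
  fixes f :: "real^'n::finite \<Rightarrow> real"
  assumes "poly_deg_eq K f"
  obtains A c x0 where "finite A" "\<forall>a\<in>A. sum a UNIV \<le> K" "\<And>x. f x = (\<Sum>a\<in>A. c a * mono_fn a x)"
    "(\<Sum>a\<in>{a\<in>A. sum a UNIV = K}. c a * mono_fn a x0) \<noteq> 0"
proof -
  obtain A c where A: "finite A" "A \<subseteq> {a. sum a UNIV \<le> K}" "\<And>x. f x = (\<Sum>a\<in>A. c a * mono_fn a x)"
    using assms unfolding poly_deg_eq_def poly_deg_le_def by (auto elim: poly_fn_onE)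
  have "\<exists>x0. (\<Sum>a\<in>{a\<in>A. sum a UNIV = K}. c a * mono_fn a x0) \<noteq> 0"
  proof (rule ccontr)
    assume "\<not> ?thesis"
    then have z: "\<And>x. (\<Sum>a\<in>{a\<in>A. sum a UNIV = K}. c a * mono_fn a x) = 0" by auto
    have "poly_fn_on {a. sum a UNIV < K} f"
    proof (rule poly_fn_onI[of "{a\<in>A. sum a UNIV \<noteq> K}" _ _ c])
      show "finite {a\<in>A. sum a UNIV \<noteq> K}" using A by simp
      show "{a\<in>A. sum a UNIV \<noteq> K} \<subseteq> {a. sum a UNIV < K}" using A by auto
      show "\<forall>x. f x = (\<Sum>a\<in>{a\<in>A. sum a UNIV \<noteq> K}. c a * mono_fn a x)"
        using A split_top[OF A(1), of c _ "\<lambda>a. sum a UNIV" K] z by simp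
    qed
    then show False using assms unfolding poly_deg_eq_def by simp
  qed
  then show ?thesis using that A by auto
qed

lemma nonzero_somewhere:
  fixes f :: "real^'n::finite \<Rightarrow> real"
  assumes "poly_deg_eq K f"
  obtains z where "f z \<noteq> 0"
proof -
  have "\<exists>z. f z \<noteq> 0"
  proof (rule ccontr)
    assume "\<not> ?thesis"
    then have "poly_fn_on {a. sum a UNIV < K} f"
      by (intro poly_fn_onI[of "{}" _ _ "\<lambda>_. 0"]) auto
    then show False using assms unfolding poly_deg_eq_def by simp
  qed
  then show ?thesis using that by blast
qed

lemma pd1_limit:
  assumes "finite A" "\<forall>a\<in>A. sum a UNIV \<le> D" "\<And>x. f x = (\<Sum>a\<in>A. c a * mono_fn a x)"
  shows "((\<lambda>t. f (t *\<^sub>R x) / t ^ D) \<longlongrightarrow> (\<Sum>a\<in>{a\<in>A. sum a UNIV = D}. c a * mono_fn a x)) at_top"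
  using monoms.pdg_limit[OF m1 assms(1,2), of c "\<lambda>a. mono_fn a x"] by (simp add: assms(3) mono_fn_scale mult.assoc)



lemma pow_div_aux:
  fixes t r :: real
  assumes "k \<le> S" "t \<noteq> 0"
  shows "t ^ k * r ^ (S - k) / t ^ S = (r / t) ^ (S - k)"
proof -
  obtain j where S: "S = k + j" using assms(1) le_Suc_ex by blast
  show ?thesis using assms(2) by (simp add: S power_add power_divide)
qed

lemma pow_inv_aux:
  fixes r :: real
  assumes "k \<le> S" "r \<noteq> 0"
  shows "r ^ S * inverse r ^ k = r ^ (S - k)"
proof -
  obtain j where S: "S = k + j" using assms(1) le_Suc_ex by blast
  show ?thesis using assms(2) by (simp add: S power_add power_inverse)
qed

lemma deg_part:
  fixes \<rho> :: "real^'l::finite \<Rightarrow> real" and Pf :: "real^'l \<Rightarrow> real" and Rf :: "real^'d::finite \<Rightarrow> real"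
  assumes rho: "poly_deg_le 1 \<rho>" and Pd: "poly_deg_eq K Pf" and Rd: "poly_deg_eq S Rf"
  shows "\<exists>g. poly2_deg_eq (K + S) g \<and> (\<forall>x y. \<rho> x \<noteq> 0 \<longrightarrow> g (x, y) = Pf x * \<rho> x ^ S * Rf (y /\<^sub>R \<rho> x))"
proof -
  obtain AP cP x0 where P: "finite AP" "\<forall>a\<in>AP. sum a UNIV \<le> K" "\<And>x. Pf x = (\<Sum>a\<in>AP. cP a * mono_fn a x)"
    and TP: "(\<Sum>a\<in>{a\<in>AP. sum a UNIV = K}. cP a * mono_fn a x0) \<noteq> 0"
    using top_nonzero[OF Pd] by blast
  obtain AR cR y0 where R: "finite AR" "\<forall>a\<in>AR. sum a UNIV \<le> S" "\<And>x. Rf x = (\<Sum>a\<in>AR. cR a * mono_fn a x)"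
    and TR: "(\<Sum>a\<in>{a\<in>AR. sum a UNIV = S}. cR a * mono_fn a y0) \<noteq> 0"
    using top_nonzero[OF Rd] by blast
  obtain Ar cr where r: "finite Ar" "Ar \<subseteq> {a. sum a UNIV \<le> 1}" "\<And>x. \<rho> x = (\<Sum>a\<in>Ar. cr a * mono_fn a x)"
    using rho unfolding poly_deg_le_def by (erule poly_fn_onE)
  define L where "L x = (\<Sum>a\<in>{a\<in>Ar. sum a UNIV = 1}. cr a * mono_fn a x)" for x
  define TPx where "TPx = (\<Sum>a\<in>{a\<in>AP. sum a UNIV = K}. cP a * mono_fn a x0)"
  define H where "H y = (\<Sum>a\<in>AR. cR a * mono_fn a y * L x0 ^ (S - sum a UNIV))" for y
  define g where "g p = Pf (fst p) * (\<Sum>a\<in>AR. cR a * mono_fn a (snd p) * \<rho> (fst p) ^ (S - sum a UNIV))" for p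
  have pdP: "pd2 K (\<lambda>p. Pf (fst p))"
    using Pd unfolding poly_deg_eq_def by (intro pd2_lift pd1_of) auto
  have pdr: "pd2 1 (\<lambda>p. \<rho> (fst p))" using rho by (intro pd2_lift pd1_of)
  have trm: "pd2 S (\<lambda>p. cR a * mono_fn a (snd p) * \<rho> (fst p) ^ (S - sum a UNIV))" if "a \<in> AR" for a
  proof -
    have "pd2 (0 + sum a UNIV + (S - sum a UNIV) * 1) (\<lambda>p. cR a * mono_fn a (snd p) * \<rho> (fst p) ^ (S - sum a UNIV))"
      using monoms.pdg_mult[OF m2 monoms.pdg_mult[OF m2 monoms.pdg_const[OF m2, of "cR a"] pd2_y[of a]]
          monoms.pdg_pow[OF m2 pdr, of "S - sum a UNIV"]] by simp
    moreover have "0 + sum a UNIV + (S - sum a UNIV) * 1 = S" using R(2) that by auto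
    ultimately show ?thesis by simp
  qed
  have "pd2 S (\<lambda>p. \<Sum>a\<in>AR. cR a * mono_fn a (snd p) * \<rho> (fst p) ^ (S - sum a UNIV))"
    by (rule monoms.pdg_sum[OF m2 R(1)]) (rule trm)
  from monoms.pdg_mult[OF m2 pdP this] have pdg: "pd2 (K + S) g" unfolding g_def by simp
  have limP: "((\<lambda>t. Pf (t *\<^sub>R x0) / t ^ K) \<longlongrightarrow> TPx) at_top"
    unfolding TPx_def by (rule pd1_limit[OF P])
  have limr: "((\<lambda>t. \<rho> (t *\<^sub>R x0) / t) \<longlongrightarrow> L x0) at_top"
    using pd1_limit[OF r(1) _ r(3), of 1 x0] r(2) unfolding L_def by auto
  have lim_g: "((\<lambda>t. g (t *\<^sub>R x0, t *\<^sub>R y) / t ^ (K + S)) \<longlongrightarrow> TPx * H y) at_top" for y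
  proof -
    have "((\<lambda>t. (Pf (t *\<^sub>R x0) / t ^ K) * (\<Sum>a\<in>AR. cR a * mono_fn a y * (\<rho> (t *\<^sub>R x0) / t) ^ (S - sum a UNIV))) \<longlongrightarrow> TPx * H y) at_top"
      unfolding H_def by (intro tendsto_mult limP tendsto_sum tendsto_const tendsto_power limr)
    moreover have "eventually (\<lambda>t. (Pf (t *\<^sub>R x0) / t ^ K) * (\<Sum>a\<in>AR. cR a * mono_fn a y * (\<rho> (t *\<^sub>R x0) / t) ^ (S - sum a UNIV)) = g (t *\<^sub>R x0, t *\<^sub>R y) / t ^ (K + S)) at_top"
      using eventually_gt_at_top[of "0::real"]
    proof eventually_elim
      case (elim t)
      have "g (t *\<^sub>R x0, t *\<^sub>R y) / t ^ (K + S) = (Pf (t *\<^sub>R x0) / t ^ K) * ((\<Sum>a\<in>AR. cR a * mono_fn a y * (t ^ sum a UNIV * \<rho> (t *\<^sub>R x0) ^ (S - sum a UNIV))) / t ^ S)"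
        proof -
          have "g (t *\<^sub>R x0, t *\<^sub>R y) = Pf (t *\<^sub>R x0) * (\<Sum>a\<in>AR. cR a * mono_fn a y * (t ^ sum a UNIV * \<rho> (t *\<^sub>R x0) ^ (S - sum a UNIV)))"
          proof -
            have tm: "cR a * mono_fn a (t *\<^sub>R y) * r ^ j = cR a * mono_fn a y * (t ^ sum a UNIV * r ^ j)" for a r j
              by (simp add: mono_fn_scale)
            show ?thesis unfolding g_def fst_conv snd_conv tm ..
          qed
          then show ?thesis by (simp only: power_add times_divide_times_eq)
        qed
      also have "\<dots> = (Pf (t *\<^sub>R x0) / t ^ K) * (\<Sum>a\<in>AR. cR a * mono_fn a y * (t ^ sum a UNIV * \<rho> (t *\<^sub>R x0) ^ (S - sum a UNIV) / t ^ S))"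
        by (simp add: sum_divide_distrib)
      also have "\<dots> = (Pf (t *\<^sub>R x0) / t ^ K) * (\<Sum>a\<in>AR. cR a * mono_fn a y * (\<rho> (t *\<^sub>R x0) / t) ^ (S - sum a UNIV))"
        using R(2) elim by (intro arg_cong2[where f="(*)"] refl sum.cong) (auto simp: pow_div_aux)
      finally show ?case by simp
    qed
    ultimately show ?thesis by (rule Lim_transform_eventually)
  qed
  have notlow: "\<not> poly2_fn_on {a. sum (fst a) UNIV + sum (snd a) UNIV < K + S} g"
  proof
    assume "poly2_fn_on {a. sum (fst a) UNIV + sum (snd a) UNIV < K + S} g"
    then obtain A2 c2 where A2: "finite A2" "A2 \<subseteq> {a. sum (fst a) UNIV + sum (snd a) UNIV < K + S}"
      "\<And>x y. g (x, y) = (\<Sum>a\<in>A2. c2 a * mono_fn (fst a) x * mono_fn (snd a) y)"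
      by (erule poly2_fn_onE)
    have z: "TPx * H y = 0" for y
    proof -
      have "((\<lambda>t. (\<Sum>a\<in>A2. c2 a * t ^ deg2 a * M2 a (x0, y)) / t ^ (K + S)) \<longlongrightarrow> (\<Sum>a\<in>{a\<in>A2. deg2 a = K + S}. c2 a * M2 a (x0, y))) at_top"
        by (rule monoms.pdg_limit[OF m2 A2(1)]) (use A2(2) in \<open>auto simp: deg2_def\<close>)
      moreover have "{a\<in>A2. deg2 a = K + S} = {}" using A2(2) by (auto simp: deg2_def)
      moreover have "(\<lambda>t. (\<Sum>a\<in>A2. c2 a * t ^ deg2 a * M2 a (x0, y)) / t ^ (K + S)) = (\<lambda>t. g (t *\<^sub>R x0, t *\<^sub>R y) / t ^ (K + S))"
      proof
        fix t :: real
        have "(\<Sum>a\<in>A2. c2 a * t ^ deg2 a * M2 a (x0, y)) = g (t *\<^sub>R x0, t *\<^sub>R y)"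
          unfolding A2(3) by (intro sum.cong refl) (simp add: deg2_def M2_def mono_fn_scale power_add mult_ac)
        then show "(\<Sum>a\<in>A2. c2 a * t ^ deg2 a * M2 a (x0, y)) / t ^ (K + S) = g (t *\<^sub>R x0, t *\<^sub>R y) / t ^ (K + S)" by simp
      qed
      ultimately have lim0: "((\<lambda>t. g (t *\<^sub>R x0, t *\<^sub>R y) / t ^ (K + S)) \<longlongrightarrow> 0) at_top" by simp
      show ?thesis using tendsto_unique[OF _ lim_g[of y] lim0] by simp
    qed
    have TPx: "TPx \<noteq> 0" using TP unfolding TPx_def .
    show False
    proof (cases "L x0 = 0")
      case True
      have "H y0 = (\<Sum>a\<in>{a\<in>AR. sum a UNIV = S}. cR a * mono_fn a y0)"
      proof -
        have "H y0 = (\<Sum>a\<in>AR. if sum a UNIV = S then cR a * mono_fn a y0 else 0)"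
          unfolding H_def True using R(2) by (intro sum.cong refl) auto
        then show ?thesis using R(1) by (simp add: sum.inter_filter)
      qed
      then show False using z[of y0] TR TPx by simp
    next
      case False
      obtain w where w: "Rf w \<noteq> 0" using nonzero_somewhere[OF Rd] by blast
      have "H (L x0 *\<^sub>R w) = (\<Sum>a\<in>AR. cR a * mono_fn a w * (L x0 ^ sum a UNIV * L x0 ^ (S - sum a UNIV)))"
        unfolding H_def by (intro sum.cong refl) (simp add: mono_fn_scale mult_ac)
      also have "\<dots> = (\<Sum>a\<in>AR. cR a * mono_fn a w * L x0 ^ S)"
        using R(2) by (intro sum.cong refl) (metis le_add_diff_inverse power_add)
      also have "\<dots> = L x0 ^ S * Rf w" by (simp add: R(3) sum_distrib_left mult_ac)
      finally have "H (L x0 *\<^sub>R w) \<noteq> 0" using False w by simp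
      then show False using z TPx by simp
    qed
  qed
  have eq: "g (x, y) = Pf x * \<rho> x ^ S * Rf (y /\<^sub>R \<rho> x)" if "\<rho> x \<noteq> 0" for x y
  proof -
    have "\<rho> x ^ S * Rf (y /\<^sub>R \<rho> x) = (\<Sum>a\<in>AR. cR a * mono_fn a y * (\<rho> x ^ S * inverse (\<rho> x) ^ sum a UNIV))"
      unfolding R(3) sum_distrib_left by (intro sum.cong refl) (simp add: mono_fn_scale mult_ac)
    also have "\<dots> = (\<Sum>a\<in>AR. cR a * mono_fn a y * \<rho> x ^ (S - sum a UNIV))"
      using R(2) that by (intro sum.cong refl) (simp add: pow_inv_aux)
    finally show ?thesis by (simp add: g_def mult.assoc)
  qed
  show ?thesis
    by (rule exI[of _ g]) (use pd2_to[OF pdg] notlow eq in \<open>auto simp: poly2_deg_eq_def\<close>)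
qed



lemma prob_part:
  fixes W :: "((real^'l::finite) \<times> (real^'d::finite)) measure" and \<rho> :: "real^'l \<Rightarrow> real"
    and f :: "real^'l \<Rightarrow> real" and h :: "real^'d \<Rightarrow> real"
  assumes W: "prob_space W" "sets W = sets borel"
    and rho_meas: "\<rho> \<in> borel_measurable borel"
    and indep: "\<And>A B. A \<in> sets borel \<Longrightarrow> B \<in> sets borel \<Longrightarrow>
        measure W {p \<in> space W. fst p \<in> A \<and> snd p /\<^sub>R \<rho> (fst p) \<in> B} =
        measure W {p \<in> space W. fst p \<in> A} * measure W {p \<in> space W. snd p /\<^sub>R \<rho> (fst p) \<in> B}"
    and fm: "f \<in> borel_measurable borel" and hm: "h \<in> borel_measurable borel"
    and fi: "integrable (distr W borel fst) f"
    and hi: "integrable (distr W borel (\<lambda>p. snd p /\<^sub>R \<rho> (fst p))) h"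
  shows "(\<integral>p. f (fst p) * h (snd p /\<^sub>R \<rho> (fst p)) \<partial>W) =
    (\<integral>x. f x \<partial>distr W borel fst) * (\<integral>z. h z \<partial>distr W borel (\<lambda>p. snd p /\<^sub>R \<rho> (fst p)))"
proof -
  interpret prob_space W by fact
  define Z where "Z p = snd p /\<^sub>R \<rho> (fst p)" for p :: "(real^'l) \<times> (real^'d)"
  have mfst: "fst \<in> measurable W borel"
    unfolding measurable_cong_sets[OF W(2) refl]
    by (intro borel_measurable_continuous_onI continuous_intros)
  have msnd: "snd \<in> measurable W borel"
    unfolding measurable_cong_sets[OF W(2) refl]
    by (intro borel_measurable_continuous_onI continuous_intros)
  have mZ: "Z \<in> measurable W borel"
    unfolding Z_def
    by (intro borel_measurable_scaleR borel_measurable_inverse measurable_compose[OF mfst rho_meas] msnd)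
  define F where "F p = f (fst p)" for p :: "(real^'l) \<times> (real^'d)"
  define G where "G p = h (Z p)" for p :: "(real^'l) \<times> (real^'d)"
  have mF: "F \<in> measurable W borel" unfolding F_def by (rule measurable_compose[OF mfst fm])
  have mG: "G \<in> measurable W borel" unfolding G_def by (rule measurable_compose[OF mZ hm])
  have dist: "distr W borel F \<Otimes>\<^sub>M distr W borel G = distr W (borel \<Otimes>\<^sub>M borel) (\<lambda>p. (F p, G p))"
  proof (rule pair_measure_eqI)
    show "sigma_finite_measure (distr W borel F)"
      by (intro prob_space_imp_sigma_finite prob_space_distr mF)
    show "sigma_finite_measure (distr W borel G)"
      by (intro prob_space_imp_sigma_finite prob_space_distr mG)
    show "sets (distr W borel F \<Otimes>\<^sub>M distr W borel G) = sets (distr W (borel \<Otimes>\<^sub>M borel) (\<lambda>p. (F p, G p)))"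
      by simp
    fix A B assume A: "A \<in> sets (distr W borel F)" and B: "B \<in> sets (distr W borel G)"
    then have A': "A \<in> sets borel" and B': "B \<in> sets borel" by auto
    have A'': "f -` A \<in> sets borel" using measurable_sets[OF fm A'] by simp
    have B'': "h -` B \<in> sets borel" using measurable_sets[OF hm B'] by simp
    have mp: "(\<lambda>p. (F p, G p)) \<in> measurable W (borel \<Otimes>\<^sub>M borel)"
      using mF mG by (rule measurable_Pair)
    have e1: "emeasure (distr W borel F) A = ennreal (measure W {p \<in> space W. fst p \<in> f -` A})"
      using A' mF by (simp add: emeasure_distr emeasure_eq_measure vimage_def Int_def conj_commute F_def)
    have e2: "emeasure (distr W borel G) B = ennreal (measure W {p \<in> space W. snd p /\<^sub>R \<rho> (fst p) \<in> h -` B})"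
      using B' mG by (simp add: emeasure_distr emeasure_eq_measure vimage_def Int_def conj_commute G_def Z_def)
    have e3: "emeasure (distr W (borel \<Otimes>\<^sub>M borel) (\<lambda>p. (F p, G p))) (A \<times> B) =
        ennreal (measure W {p \<in> space W. fst p \<in> f -` A \<and> snd p /\<^sub>R \<rho> (fst p) \<in> h -` B})"
      using A' B' mp by (simp add: emeasure_distr emeasure_eq_measure vimage_def Int_def F_def G_def Z_def conj_commute)
    show "emeasure (distr W borel F) A * emeasure (distr W borel G) B =
        emeasure (distr W (borel \<Otimes>\<^sub>M borel) (\<lambda>p. (F p, G p))) (A \<times> B)"
      unfolding e1 e2 e3 indep[OF A'' B''] by (simp add: ennreal_mult)
  qed
  have ind2: "indep_var borel F borel G"
    unfolding indep_var_distribution_eq using mF mG dist by simp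
  have i1: "integrable W F"
    using fi integrable_distr_eq[OF mfst fm] by (simp add: F_def[abs_def])
  have i2: "integrable W G"
    using hi integrable_distr_eq[OF mZ hm] by (simp add: G_def[abs_def] Z_def[abs_def])
  have "(\<integral>p. F p * G p \<partial>W) = (\<integral>p. F p \<partial>W) * (\<integral>p. G p \<partial>W)"
    by (rule indep_var_lebesgue_integral[OF ind2 i1 i2])
  then show ?thesis
    using integral_distr[OF mfst fm] integral_distr[OF mZ hm] by (simp add: Z_def[abs_def] F_def G_def)
qed



lemma pd1_cont:
  assumes "pd1 D f"
  shows "f \<in> borel_measurable borel"
proof -
  obtain A c where A: "finite A" "\<forall>p. f p = (\<Sum>a\<in>A. c a * mono_fn a p)"
    using assms unfolding pdg_def by blast
  have "f = (\<lambda>x. \<Sum>a\<in>A. c a * (\<Prod>i\<in>UNIV. (x $ i) ^ (a i)))"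
    using A(2) unfolding mono_fn_def by auto
  moreover have "continuous_on UNIV (\<lambda>x::real^'a. \<Sum>a\<in>A. c a * (\<Prod>i\<in>UNIV. (x $ i) ^ (a i)))"
    by (intro continuous_intros)
  ultimately show ?thesis by (simp add: borel_measurable_continuous_onI)
qed

lemma pd1_integrable:
  fixes \<mu> :: "(real^'n::finite) measure"
  assumes S: "sets \<mu> = sets borel" and mom: "\<And>m. integrable \<mu> (\<lambda>x. norm x ^ m)" and pd: "pd1 D f"
  shows "integrable \<mu> f"
proof -
  obtain A c where A: "finite A" "\<forall>p. f p = (\<Sum>a\<in>A. c a * mono_fn a p)"
    using pd unfolding pdg_def by blast
  have mm: "mono_fn a \<in> borel_measurable \<mu>" for a
  proof -
    have "pd1 (sum a UNIV) (mono_fn a)"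
      unfolding pdg_def by (rule exI[of _ "{a}"], rule exI[of _ "\<lambda>_. 1"]) simp
    then show ?thesis unfolding measurable_cong_sets[OF S refl] by (rule pd1_cont)
  qed
  have im: "integrable \<mu> (mono_fn a)" for a
    by (rule Bochner_Integration.integrable_bound[OF mom[of "sum a UNIV"] mm])
       (auto simp: mono_fn_bound)
  have "integrable \<mu> (\<lambda>x. \<Sum>a\<in>A. c a * mono_fn a x)"
    by (rule Bochner_Integration.integrable_sum) (rule Bochner_Integration.integrable_mult_right[OF im])
  moreover have "f = (\<lambda>x. \<Sum>a\<in>A. c a * mono_fn a x)" using A(2) by auto
  ultimately show ?thesis by simp
qed

theorem mainTheorem1:
  fixes W :: "((real ^ 'l::finite) \<times> (real ^ 'd::finite)) measure"
    and \<rho> :: "real ^ 'l \<Rightarrow> real"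
    and P :: "nat \<Rightarrow> ('l \<Rightarrow> nat) \<Rightarrow> real ^ 'l \<Rightarrow> real"
    and R :: "('d \<Rightarrow> nat) \<Rightarrow> real ^ 'd \<Rightarrow> real"
  assumes W: "prob_space W" "sets W = sets borel"
    and rho_poly: "poly_deg_le 1 \<rho>"
    and rho_nz: "AE p in W. \<rho> (fst p) \<noteq> 0"
    and indep: "\<And>A B. A \<in> sets borel \<Longrightarrow> B \<in> sets borel \<Longrightarrow>
        measure W {p \<in> space W. fst p \<in> A \<and> snd p /\<^sub>R \<rho> (fst p) \<in> B} =
        measure W {p \<in> space W. fst p \<in> A} * measure W {p \<in> space W. snd p /\<^sub>R \<rho> (fst p) \<in> B}"
    and mom_X: "\<And>m. integrable (distr W borel fst) (\<lambda>x. norm x ^ m)"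
    and mom_Z: "\<And>m. integrable (distr W borel (\<lambda>p. snd p /\<^sub>R \<rho> (fst p))) (\<lambda>z. norm z ^ m)"
    and P_deg: "\<And>m k. poly_deg_eq (sum k UNIV) (P m k)"
    and P_orth: "\<And>m k k'. k \<noteq> k' \<Longrightarrow>
        (\<integral>x. P m k x * P m k' x * \<rho> x ^ (2 * m) \<partial>(distr W borel fst)) = 0"
    and R_deg: "\<And>s. poly_deg_eq (sum s UNIV) (R s)"
    and R_orth: "\<And>s s'. s \<noteq> s' \<Longrightarrow>
        (\<integral>z. R s z * R s' z \<partial>(distr W borel (\<lambda>p. snd p /\<^sub>R \<rho> (fst p)))) = 0"
  shows "(\<forall>k s. \<exists>g. poly2_deg_eq (sum k UNIV + sum s UNIV) g \<and>
            (\<forall>x y. \<rho> x \<noteq> 0 \<longrightarrow> g (x, y) = Gfun P \<rho> R k s (x, y)))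
       \<and> (\<forall>k s k' s'. (\<integral>p. Gfun P \<rho> R k s p * Gfun P \<rho> R k' s' p \<partial>W) =
            (if (k, s) = (k', s') then
               (\<integral>x. (P (sum s UNIV) k x)\<^sup>2 * \<rho> x ^ (2 * sum s UNIV) \<partial>(distr W borel fst)) *
               (\<integral>z. (R s z)\<^sup>2 \<partial>(distr W borel (\<lambda>p. snd p /\<^sub>R \<rho> (fst p))))
             else 0))"
proof (intro conjI allI)
  fix k :: "'l \<Rightarrow> nat" and s :: "'d \<Rightarrow> nat"
  show "\<exists>g. poly2_deg_eq (sum k UNIV + sum s UNIV) g \<and>
            (\<forall>x y. \<rho> x \<noteq> 0 \<longrightarrow> g (x, y) = Gfun P \<rho> R k s (x, y))"
    using deg_part[OF rho_poly P_deg[where m="sum s UNIV" and k=k] R_deg[of s]] by (simp add: Gfun_def)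
next
  fix k k' :: "'l \<Rightarrow> nat" and s s' :: "'d \<Rightarrow> nat"
  define \<mu>X where "\<mu>X = distr W borel (fst :: (real^'l) \<times> (real^'d) \<Rightarrow> real^'l)"
  define \<mu>Z where "\<mu>Z = distr W borel (\<lambda>p :: (real^'l) \<times> (real^'d). snd p /\<^sub>R \<rho> (fst p))"
  define S where "S = sum s UNIV"
  define S' where "S' = sum s' UNIV"
  define F1 where "F1 x = P S k x * \<rho> x ^ S * (P S' k' x * \<rho> x ^ S')" for x
  define H1 where "H1 z = R s z * R s' z" for z
  have pP: "pd1 (sum k UNIV) (P m k)" for m k
    using P_deg[where m=m and k=k] unfolding poly_deg_eq_def by (intro pd1_of) auto
  have pR: "pd1 (sum s UNIV) (R s)" for s
    using R_deg[of s] unfolding poly_deg_eq_def by (intro pd1_of) auto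
  have pr: "pd1 1 \<rho>" using rho_poly by (rule pd1_of)
  have pF: "pd1 (sum k UNIV + S * 1 + (sum k' UNIV + S' * 1)) F1"
    unfolding F1_def[abs_def]
    by (intro monoms.pdg_mult[OF m1] monoms.pdg_pow[OF m1] pP pr)
  have pH: "pd1 (S + S') H1"
    unfolding H1_def[abs_def] S_def S'_def by (intro monoms.pdg_mult[OF m1] pR)
  have Gsplit: "Gfun P \<rho> R k s p * Gfun P \<rho> R k' s' p = F1 (fst p) * H1 (snd p /\<^sub>R \<rho> (fst p))" for p
    by (cases p) (simp add: Gfun_def F1_def H1_def S_def S'_def mult_ac)
  have intF: "integrable \<mu>X F1"
    by (rule pd1_integrable[OF _ mom_X[folded \<mu>X_def] pF]) (simp add: \<mu>X_def)
  have intH: "integrable \<mu>Z H1"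
    by (rule pd1_integrable[OF _ mom_Z[folded \<mu>Z_def] pH]) (simp add: \<mu>Z_def)
  have main: "(\<integral>p. Gfun P \<rho> R k s p * Gfun P \<rho> R k' s' p \<partial>W) = (\<integral>x. F1 x \<partial>\<mu>X) * (\<integral>z. H1 z \<partial>\<mu>Z)"
    unfolding Gsplit \<mu>X_def \<mu>Z_def
    by (rule prob_part[OF W pd1_cont[OF pr] indep pd1_cont[OF pF] pd1_cont[OF pH]])
       (use intF intH in \<open>simp_all add: \<mu>X_def \<mu>Z_def\<close>)
  show "(\<integral>p. Gfun P \<rho> R k s p * Gfun P \<rho> R k' s' p \<partial>W) =
            (if (k, s) = (k', s') then
               (\<integral>x. (P (sum s UNIV) k x)\<^sup>2 * \<rho> x ^ (2 * sum s UNIV) \<partial>(distr W borel fst)) *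
               (\<integral>z. (R s z)\<^sup>2 \<partial>(distr W borel (\<lambda>p. snd p /\<^sub>R \<rho> (fst p))))
             else 0)"
  proof (cases "s = s'")
    case False
    then have "(\<integral>z. H1 z \<partial>\<mu>Z) = 0" unfolding H1_def \<mu>Z_def by (rule R_orth)
    then show ?thesis using main False by simp
  next
    case ss: True
    have F1eq: "F1 x = P S k x * P S k' x * \<rho> x ^ (2 * S)" for x
      unfolding F1_def S'_def ss[symmetric] S_def[symmetric]
      proof -
        have "\<rho> x ^ (2 * S) = \<rho> x ^ S * \<rho> x ^ S" by (simp add: mult_2 power_add)
        then show "P S k x * \<rho> x ^ S * (P S k' x * \<rho> x ^ S) = P S k x * P S k' x * \<rho> x ^ (2 * S)"
          by (simp add: mult_ac)
      qed
    show ?thesis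
    proof (cases "k = k'")
      case False
      have "(\<integral>x. F1 x \<partial>\<mu>X) = 0" unfolding F1eq \<mu>X_def by (rule P_orth[OF False])
      then show ?thesis using main False by simp
    next
      case True
      have "(\<integral>x. F1 x \<partial>\<mu>X) = (\<integral>x. (P S k x)\<^sup>2 * \<rho> x ^ (2 * S) \<partial>\<mu>X)"
        unfolding F1eq True by (simp add: power2_eq_square)
      moreover have "(\<integral>z. H1 z \<partial>\<mu>Z) = (\<integral>z. (R s z)\<^sup>2 \<partial>\<mu>Z)"
        unfolding H1_def ss by (simp add: power2_eq_square)
      ultimately show ?thesis using main True ss by (simp add: S_def \<mu>X_def \<mu>Z_def)
    qed
  qed
qed


end
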